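(* Let $G=\mathbb{Z}_2\times\mathbb{Z}_2\times\mathbb{Z}_2$ and let $M$ be a finite-dimensional graded pointed Majid algebra over $\mathbbm{k}$ with group of group-likes $G$, generated by $G$ and quasi-commutative skew-primitive elements $X_1,\dots,X_N$ (i.e. $X_iX_j=q_{j,i}X_jX_i$ for $i\ne j$) with $\Delta(X_i)=X_i\otimes1+x_i\otimes X_i$, where $x_1,x_2,x_3$ generate $G$ (so $G=\langle x_1\rangle\times\langle x_2\rangle\times\langle x_3\rangle$). Suppose the associator of $M$ restricted to $G$ has the form $$\Phi(x_1^{i_1}x_2^{i_2}x_3^{i_3},x_1^{j_1}x_2^{j_2}x_3^{j_3},x_1^{k_1}x_2^{k_2}x_3^{k_3})=\prod_{l=1}^3(-1)^{a_li_l[\frac{j_l+k_l}{2}]}\prod_{1\le s<t\le3}(-1)^{a_{st}i_t[\frac{j_s+k_s}{2}]}$$ ($i_l,j_l,k_l\in\{0,1\}$) with $a_l,a_{st}\in\{0,1\}$. Then $a_{12}=a_{13}=a_{23}=0$, i.e. $\Phi(x_1^{i_1}x_2^{i_2}x_3^{i_3},x_1^{j_1}x_2^{j_2}x_3^{j_3},x_1^{k_1}x_2^{k_2}x_3^{k_3})=\prod_{l=1}^3(-1)^{a_li_l[\frac{j_l+k_l}{2}]}$.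
   Context: $\mathbbm{k}$ algebraically closed of characteristic $0$; $[x]$ the integer part. A Majid algebra (coquasi-Hopf algebra) is a coalgebra with a unital non-associative multiplication that is a coalgebra map, an associator $\Phi$ (convolution-invertible normalized 3-cocycle) with $a_1(b_1c_1)\Phi(a_2,b_2,c_2)=\Phi(a_1,b_1,c_1)(a_2b_2)c_2$, and a quasi-antipode $(S,\alpha,\beta)$ satisfying the coquasi-Hopf axioms. Pointed: coradical $\mathbbm{k}G$, $G$ the group-likes; the associator restricts to a normalized 3-cocycle on $G$. Graded: coradically graded $M=\bigoplus M(n)$, $M(0)=\mathbbm{k}G$, respected by the structure maps, with $\Phi,\alpha,\beta$ vanishing when an argument has positive degree. Skew-primitive elements are elements $X$ with $\Delta(X)=X\otimes h+g\otimes X$, $g,h\in G$; "generated by" means generated as an algebra. *)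

theory Defs
  imports "HOL-Computational_Algebra.Polynomial"
begin

text \<open>A finite-dimensional space M is
  represented as 'b => 'k for a finite basis type 'b (chosen homogeneous for the
  grading); tensor powers as functions on tuples of basis indices.  Multilinear
  structure maps are given by structure constants on basis elements.\<close>

definition alg_closed_field :: "'k::field itself \<Rightarrow> bool" where
  "alg_closed_field _ \<longleftrightarrow> (\<forall>p::'k poly. 0 < degree p \<longrightarrow> (\<exists>z. poly p z = 0))"

definition bvec :: "'b \<Rightarrow> 'b \<Rightarrow> 'k::field" where
  "bvec b = (\<lambda>i. if i = b then 1 else 0)"

definition lspan :: "('i \<Rightarrow> 'k::field) set \<Rightarrow> ('i \<Rightarrow> 'k) set" where
  "lspan S = {v. \<exists>F c. finite F \<and> F \<subseteq> S \<and> v = (\<lambda>x. \<Sum>u\<in>F. c u * u x)}"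

definition lsubspace :: "('i \<Rightarrow> 'k::field) set \<Rightarrow> bool" where
  "lsubspace S \<longleftrightarrow> lspan S = S"

definition tens :: "('b \<Rightarrow> 'k::field) \<Rightarrow> ('b \<Rightarrow> 'k) \<Rightarrow> ('b \<times> 'b \<Rightarrow> 'k)" where
  "tens u v = (\<lambda>(i, j). u i * v j)"

definition tspan :: "('b \<Rightarrow> 'k::field) set \<Rightarrow> ('b \<Rightarrow> 'k) set \<Rightarrow> ('b \<times> 'b \<Rightarrow> 'k) set" where
  "tspan U W = lspan {tens u w | u w. u \<in> U \<and> w \<in> W}"

definition mulv :: "('b \<Rightarrow> 'b \<Rightarrow> 'b \<Rightarrow> 'k::field) \<Rightarrow> ('b::finite \<Rightarrow> 'k) \<Rightarrow> ('b \<Rightarrow> 'k) \<Rightarrow> ('b \<Rightarrow> 'k)" where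
  "mulv mu u v = (\<lambda>t. \<Sum>i\<in>UNIV. \<Sum>j\<in>UNIV. u i * v j * mu i j t)"

definition comul :: "('b \<Rightarrow> 'b \<Rightarrow> 'b \<Rightarrow> 'k::field) \<Rightarrow> ('b::finite \<Rightarrow> 'k) \<Rightarrow> ('b \<times> 'b \<Rightarrow> 'k)" where
  "comul co u = (\<lambda>(j, k). \<Sum>i\<in>UNIV. u i * co i j k)"

definition counit :: "('b \<Rightarrow> 'k::field) \<Rightarrow> ('b::finite \<Rightarrow> 'k) \<Rightarrow> 'k" where
  "counit eps u = (\<Sum>i\<in>UNIV. u i * eps i)"

definition trif :: "('b \<Rightarrow> 'b \<Rightarrow> 'b \<Rightarrow> 'k::field) \<Rightarrow> ('b::finite \<Rightarrow> 'k) \<Rightarrow> ('b \<Rightarrow> 'k) \<Rightarrow> ('b \<Rightarrow> 'k) \<Rightarrow> 'k" where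
  "trif phi u v w = (\<Sum>p\<in>UNIV. \<Sum>q\<in>UNIV. \<Sum>r\<in>UNIV. u p * v q * w r * phi p q r)"

text \<open>S(e_a) = sum_j s a j e_j\<close>
definition svec :: "('b \<Rightarrow> 'b \<Rightarrow> 'k::field) \<Rightarrow> 'b \<Rightarrow> ('b \<Rightarrow> 'k)" where
  "svec s a = (\<lambda>j. s a j)"

definition co3 :: "('b \<Rightarrow> 'b \<Rightarrow> 'b \<Rightarrow> 'k::field) \<Rightarrow> 'b::finite \<Rightarrow> 'b \<Rightarrow> 'b \<Rightarrow> 'b \<Rightarrow> 'k" where
  "co3 co a i j k = (\<Sum>l\<in>UNIV. co a i l * co l j k)"

definition co5 :: "('b \<Rightarrow> 'b \<Rightarrow> 'b \<Rightarrow> 'k::field) \<Rightarrow> 'b::finite \<Rightarrow> 'b \<Rightarrow> 'b \<Rightarrow> 'b \<Rightarrow> 'b \<Rightarrow> 'b \<Rightarrow> 'k" where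
  "co5 co a i1 i2 i3 i4 i5 = (\<Sum>l\<in>UNIV. co3 co a i1 i2 l * co3 co l i3 i4 i5)"

definition sw3 :: "('b \<Rightarrow> 'b \<Rightarrow> 'b \<Rightarrow> 'k::field) \<Rightarrow> 'b::finite \<Rightarrow> 'b \<Rightarrow> 'b \<Rightarrow>
    ('b \<Rightarrow> 'b \<Rightarrow> 'b \<Rightarrow> 'b \<Rightarrow> 'b \<Rightarrow> 'b \<Rightarrow> 'k) \<Rightarrow> 'k" where
  "sw3 co a b c F = (\<Sum>a1\<in>UNIV. \<Sum>a2\<in>UNIV. \<Sum>b1\<in>UNIV. \<Sum>b2\<in>UNIV. \<Sum>c1\<in>UNIV. \<Sum>c2\<in>UNIV.
      co a a1 a2 * co b b1 b2 * co c c1 c2 * F a1 b1 c1 a2 b2 c2)"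

definition majid_algebra ::
  "('b::finite \<Rightarrow> 'b \<Rightarrow> 'b \<Rightarrow> 'k::field) \<Rightarrow> ('b \<Rightarrow> 'k) \<Rightarrow> ('b \<Rightarrow> 'b \<Rightarrow> 'b \<Rightarrow> 'k) \<Rightarrow> ('b \<Rightarrow> 'k)
   \<Rightarrow> ('b \<Rightarrow> 'b \<Rightarrow> 'b \<Rightarrow> 'k) \<Rightarrow> ('b \<Rightarrow> 'b \<Rightarrow> 'k) \<Rightarrow> ('b \<Rightarrow> 'k) \<Rightarrow> ('b \<Rightarrow> 'k) \<Rightarrow> bool" where
  "majid_algebra mu one co eps phi s alpha beta \<longleftrightarrow>
     \<comment> \<open>coalgebra: coassociativity and counit\<close>
     (\<forall>a i j k. (\<Sum>l\<in>UNIV. co a l k * co l i j) = (\<Sum>l\<in>UNIV. co a i l * co l j k)) \<and>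
     (\<forall>a j. (\<Sum>i\<in>UNIV. co a i j * eps i) = bvec a j \<and> (\<Sum>i\<in>UNIV. co a j i * eps i) = bvec a j) \<and>
     \<comment> \<open>unit\<close>
     (\<forall>a. mulv mu one (bvec a) = bvec a \<and> mulv mu (bvec a) one = bvec a) \<and>
     \<comment> \<open>multiplication and unit are coalgebra maps\<close>
     (\<forall>a b j k. (\<Sum>l\<in>UNIV. mu a b l * co l j k) =
        (\<Sum>a1\<in>UNIV. \<Sum>a2\<in>UNIV. \<Sum>b1\<in>UNIV. \<Sum>b2\<in>UNIV. co a a1 a2 * co b b1 b2 * mu a1 b1 j * mu a2 b2 k)) \<and>
     (\<forall>a b. (\<Sum>l\<in>UNIV. mu a b l * eps l) = eps a * eps b) \<and>
     comul co one = tens one one \<and> counit eps one = 1 \<and>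
     \<comment> \<open>quasi-associativity: a1(b1c1) Phi(a2,b2,c2) = Phi(a1,b1,c1) (a2b2)c2\<close>
     (\<forall>a b c t. sw3 co a b c (\<lambda>a1 b1 c1 a2 b2 c2. mulv mu (bvec a1) (mulv mu (bvec b1) (bvec c1)) t * phi a2 b2 c2)
              = sw3 co a b c (\<lambda>a1 b1 c1 a2 b2 c2. phi a1 b1 c1 * mulv mu (mulv mu (bvec a2) (bvec b2)) (bvec c2) t)) \<and>
     \<comment> \<open>3-cocycle: Phi(b1,c1,d1)Phi(a1,b2c2,d2)Phi(a2,b3,c3) = Phi(a1,b1,c1d1)Phi(a2b2,c2,d2)\<close>
     (\<forall>a b c d.
        (\<Sum>a1\<in>UNIV. \<Sum>a2\<in>UNIV. \<Sum>b1\<in>UNIV. \<Sum>b2\<in>UNIV. \<Sum>b3\<in>UNIV. \<Sum>c1\<in>UNIV. \<Sum>c2\<in>UNIV. \<Sum>c3\<in>UNIV.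
         \<Sum>d1\<in>UNIV. \<Sum>d2\<in>UNIV.
           co a a1 a2 * co3 co b b1 b2 b3 * co3 co c c1 c2 c3 * co d d1 d2 *
           (phi b1 c1 d1 * trif phi (bvec a1) (mulv mu (bvec b2) (bvec c2)) (bvec d2) * phi a2 b3 c3))
      = (\<Sum>a1\<in>UNIV. \<Sum>a2\<in>UNIV. \<Sum>b1\<in>UNIV. \<Sum>b2\<in>UNIV. \<Sum>c1\<in>UNIV. \<Sum>c2\<in>UNIV.
         \<Sum>d1\<in>UNIV. \<Sum>d2\<in>UNIV.
           co a a1 a2 * co b b1 b2 * co c c1 c2 * co d d1 d2 *
           (trif phi (bvec a1) (bvec b1) (mulv mu (bvec c1) (bvec d1)) *
            trif phi (mulv mu (bvec a2) (bvec b2)) (bvec c2) (bvec d2)))) \<and>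
     \<comment> \<open>normalized\<close>
     (\<forall>a b. trif phi (bvec a) one (bvec b) = eps a * eps b) \<and>
     \<comment> \<open>S is a coalgebra antimorphism\<close>
     (\<forall>a j k. (\<Sum>l\<in>UNIV. s a l * co l j k) = (\<Sum>a1\<in>UNIV. \<Sum>a2\<in>UNIV. co a a1 a2 * s a2 j * s a1 k)) \<and>
     (\<forall>a. (\<Sum>l\<in>UNIV. s a l * eps l) = eps a) \<and>
     \<comment> \<open>S(a1) alpha(a2) a3 = alpha(a) 1 ;  a1 beta(a2) S(a3) = beta(a) 1\<close>
     (\<forall>a t. (\<Sum>i\<in>UNIV. \<Sum>j\<in>UNIV. \<Sum>k\<in>UNIV. co3 co a i j k * alpha j * mulv mu (svec s i) (bvec k) t)
            = alpha a * one t) \<and>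
     (\<forall>a t. (\<Sum>i\<in>UNIV. \<Sum>j\<in>UNIV. \<Sum>k\<in>UNIV. co3 co a i j k * beta j * mulv mu (bvec i) (svec s k) t)
            = beta a * one t) \<and>
     (\<exists>psi.
        \<comment> \<open>psi is the convolution inverse of phi\<close>
        (\<forall>a b c. sw3 co a b c (\<lambda>a1 b1 c1 a2 b2 c2. phi a1 b1 c1 * psi a2 b2 c2) = eps a * eps b * eps c \<and>
                 sw3 co a b c (\<lambda>a1 b1 c1 a2 b2 c2. psi a1 b1 c1 * phi a2 b2 c2) = eps a * eps b * eps c) \<and>
        \<comment> \<open>Phi(a1,S(a3),a5) beta(a2) alpha(a4) = eps(a) ; Phi^-1(S(a1),a3,S(a5)) alpha(a2) beta(a4) = eps(a)\<close>
        (\<forall>a. (\<Sum>i1\<in>UNIV. \<Sum>i2\<in>UNIV. \<Sum>i3\<in>UNIV. \<Sum>i4\<in>UNIV. \<Sum>i5\<in>UNIV.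
               co5 co a i1 i2 i3 i4 i5 * trif phi (bvec i1) (svec s i3) (bvec i5) * beta i2 * alpha i4) = eps a) \<and>
        (\<forall>a. (\<Sum>i1\<in>UNIV. \<Sum>i2\<in>UNIV. \<Sum>i3\<in>UNIV. \<Sum>i4\<in>UNIV. \<Sum>i5\<in>UNIV.
               co5 co a i1 i2 i3 i4 i5 * trif psi (svec s i1) (bvec i3) (svec s i5) * alpha i2 * beta i4) = eps a))"

definition grouplikes :: "('b \<Rightarrow> 'b \<Rightarrow> 'b \<Rightarrow> 'k::field) \<Rightarrow> ('b::finite \<Rightarrow> 'k) set" where
  "grouplikes co = {g. g \<noteq> (\<lambda>_. 0) \<and> comul co g = tens g g}"

definition subcoalgebra :: "('b \<Rightarrow> 'b \<Rightarrow> 'b \<Rightarrow> 'k::field) \<Rightarrow> ('b::finite \<Rightarrow> 'k) set \<Rightarrow> bool" where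
  "subcoalgebra co D \<longleftrightarrow> lsubspace D \<and> (\<forall>v\<in>D. comul co v \<in> tspan D D)"

definition simple_subcoalgebra :: "('b \<Rightarrow> 'b \<Rightarrow> 'b \<Rightarrow> 'k::field) \<Rightarrow> ('b::finite \<Rightarrow> 'k) set \<Rightarrow> bool" where
  "simple_subcoalgebra co D \<longleftrightarrow> subcoalgebra co D \<and> D \<noteq> {\<lambda>_. 0} \<and>
     (\<forall>D'. subcoalgebra co D' \<and> D' \<subseteq> D \<longrightarrow> D' = {\<lambda>_. 0} \<or> D' = D)"

definition coradical :: "('b \<Rightarrow> 'b \<Rightarrow> 'b \<Rightarrow> 'k::field) \<Rightarrow> ('b::finite \<Rightarrow> 'k) set" where
  "coradical co = lspan (\<Union>{D. simple_subcoalgebra co D})"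

definition pointed :: "('b::finite \<Rightarrow> 'b \<Rightarrow> 'b \<Rightarrow> 'k::field) \<Rightarrow> bool" where
  "pointed co \<longleftrightarrow> coradical co = lspan (grouplikes co)"

fun corad_filt :: "('b \<Rightarrow> 'b \<Rightarrow> 'b \<Rightarrow> 'k::field) \<Rightarrow> nat \<Rightarrow> ('b::finite \<Rightarrow> 'k) set" where
  "corad_filt co 0 = coradical co"
| "corad_filt co (Suc n) =
     {v. comul co v \<in> lspan ({tens u w | u w. w \<in> corad_filt co n} \<union>
                               {tens u w | u w. u \<in> coradical co})}"

definition homog :: "('b \<Rightarrow> nat) \<Rightarrow> nat \<Rightarrow> ('b \<Rightarrow> 'k::field) set" where
  "homog deg n = lspan {bvec b | b. deg b = n}"

definition graded_majid ::
  "('b \<Rightarrow> nat) \<Rightarrow> ('b::finite \<Rightarrow> 'b \<Rightarrow> 'b \<Rightarrow> 'k::field) \<Rightarrow> ('b \<Rightarrow> 'k) \<Rightarrow> ('b \<Rightarrow> 'b \<Rightarrow> 'b \<Rightarrow> 'k) \<Rightarrow> ('b \<Rightarrow> 'k)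
   \<Rightarrow> ('b \<Rightarrow> 'b \<Rightarrow> 'b \<Rightarrow> 'k) \<Rightarrow> ('b \<Rightarrow> 'b \<Rightarrow> 'k) \<Rightarrow> ('b \<Rightarrow> 'k) \<Rightarrow> ('b \<Rightarrow> 'k) \<Rightarrow> bool" where
  "graded_majid deg mu one co eps phi s alpha beta \<longleftrightarrow>
     (\<forall>i j k. mu i j k \<noteq> 0 \<longrightarrow> deg k = deg i + deg j) \<and>
     (\<forall>i j k. co i j k \<noteq> 0 \<longrightarrow> deg i = deg j + deg k) \<and>
     (\<forall>b. one b \<noteq> 0 \<longrightarrow> deg b = 0) \<and>
     (\<forall>b. eps b \<noteq> 0 \<longrightarrow> deg b = 0) \<and>
     (\<forall>i j. s i j \<noteq> 0 \<longrightarrow> deg i = deg j) \<and>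
     (\<forall>p q r. phi p q r \<noteq> 0 \<longrightarrow> deg p = 0 \<and> deg q = 0 \<and> deg r = 0) \<and>
     (\<forall>b. alpha b \<noteq> 0 \<longrightarrow> deg b = 0) \<and>
     (\<forall>b. beta b \<noteq> 0 \<longrightarrow> deg b = 0) \<and>
     homog deg 0 = lspan (grouplikes co) \<and>
     \<comment> \<open>coradically graded: the coradical filtration is the filtration induced by the grading\<close>
     (\<forall>n. corad_filt co n = lspan {bvec b | b. deg b \<le> n})"

text \<open>algebra generated by a set (non-associative: closure under multiplication)\<close>
definition generates :: "('b::finite \<Rightarrow> 'b \<Rightarrow> 'b \<Rightarrow> 'k::field) \<Rightarrow> ('b \<Rightarrow> 'k) \<Rightarrow> ('b \<Rightarrow> 'k) set \<Rightarrow> bool" where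
  "generates mu one S \<longleftrightarrow>
     (\<forall>T. lsubspace T \<and> one \<in> T \<and> S \<subseteq> T \<and> (\<forall>u\<in>T. \<forall>v\<in>T. mulv mu u v \<in> T) \<longrightarrow> T = UNIV)"

definition pw :: "('b \<Rightarrow> 'k::field) \<Rightarrow> ('b \<Rightarrow> 'k) \<Rightarrow> nat \<Rightarrow> ('b \<Rightarrow> 'k)" where
  "pw one v n = (if n = 0 then one else v)"

text \<open>x1^i1 x2^i2 x3^i3 for i_l in {0,1}\<close>
definition mono :: "('b::finite \<Rightarrow> 'b \<Rightarrow> 'b \<Rightarrow> 'k::field) \<Rightarrow> ('b \<Rightarrow> 'k) \<Rightarrow> (nat \<Rightarrow> 'b \<Rightarrow> 'k) \<Rightarrow> nat \<times> nat \<times> nat \<Rightarrow> ('b \<Rightarrow> 'k)" where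
  "mono mu one x i = (case i of (i1, i2, i3) \<Rightarrow>
     mulv mu (mulv mu (pw one (x 1) i1) (pw one (x 2) i2)) (pw one (x 3) i3))"

definition cube :: "(nat \<times> nat \<times> nat) set" where
  "cube = {(i1, i2, i3). i1 \<le> 1 \<and> i2 \<le> 1 \<and> i3 \<le> 1}"

definition comp :: "nat \<Rightarrow> nat \<times> nat \<times> nat \<Rightarrow> nat" where
  "comp l i = (case i of (i1, i2, i3) \<Rightarrow> if l = 1 then i1 else if l = 2 then i2 else i3)"

definition phi_formula :: "(nat \<Rightarrow> nat) \<Rightarrow> (nat \<Rightarrow> nat \<Rightarrow> nat) \<Rightarrow> nat \<times> nat \<times> nat \<Rightarrow> nat \<times> nat \<times> nat \<Rightarrow> nat \<times> nat \<times> nat \<Rightarrow> 'k::field" where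
  "phi_formula a aa i j k =
     (\<Prod>l\<in>{1..3}. (-1) ^ (a l * comp l i * ((comp l j + comp l k) div 2))) *
     (\<Prod>(s, t)\<in>{(s, t). 1 \<le> s \<and> s < t \<and> t \<le> (3::nat)}. (-1) ^ (aa s t * comp t i * ((comp s j + comp s k) div 2)))"

definition phi_formula_diag :: "(nat \<Rightarrow> nat) \<Rightarrow> nat \<times> nat \<times> nat \<Rightarrow> nat \<times> nat \<times> nat \<Rightarrow> nat \<times> nat \<times> nat \<Rightarrow> 'k::field" where
  "phi_formula_diag a i j k = (\<Prod>l\<in>{1..3}. (-1) ^ (a l * comp l i * ((comp l j + comp l k) div 2)))"

end

theory Submission
  imports Defs
begin


lemma bvec_mult_r: "f * bvec j i = (if i = j then f else (0::'k::field))"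
  by (simp add: bvec_def)
lemma bvec_mult_l: "bvec j i * f = (if i = j then f else (0::'k::field))"
  by (simp add: bvec_def)

lemma sum_bvec_r[simp]: "(\<Sum>i\<in>(UNIV::'b::finite set). f i * bvec j i) = (f j :: 'k::field)"
  by (simp add: bvec_mult_r)
lemma sum_bvec_l[simp]: "(\<Sum>i\<in>(UNIV::'b::finite set). bvec j i * f i) = (f j :: 'k::field)"
  by (simp add: bvec_mult_l)

lemma mulv_bvec_l: "mulv mu (bvec a) v t = (\<Sum>j\<in>UNIV. v j * mu a j t)"
proof -
  have "\<And>i. (\<Sum>j\<in>UNIV. bvec a i * v j * mu i j t) = bvec a i * (\<Sum>j\<in>UNIV. v j * mu i j t)"
    by (simp add: sum_distrib_left mult.assoc)
  then show ?thesis unfolding mulv_def by simp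
qed
lemma mulv_bvec_r: "mulv mu u (bvec b) t = (\<Sum>i\<in>UNIV. u i * mu i b t)"
proof -
  have "\<And>i. (\<Sum>j\<in>UNIV. u i * bvec b j * mu i j t) = (\<Sum>j\<in>UNIV. bvec b j * (u i * mu i j t))"
    by (simp add: ac_simps)
  then show ?thesis unfolding mulv_def by simp
qed

lemma mulv_lin_left: "mulv mu u v t = (\<Sum>a\<in>UNIV. u a * mulv mu (bvec a) v t)"
  unfolding mulv_bvec_l unfolding mulv_def
  by (simp add: sum_distrib_left mult.assoc)

lemma mulv_lin_right: "mulv mu u v t = (\<Sum>b\<in>UNIV. v b * mulv mu u (bvec b) t)"
  unfolding mulv_bvec_r unfolding mulv_def
  apply (simp add: sum_distrib_left)
  apply (subst sum.swap) apply (rule sum.cong, simp)+ apply (simp add: ac_simps)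
  done

lemma mulv_bb: "mulv mu (bvec a) (bvec b) t = mu a b t"
  by (simp add: mulv_bvec_l bvec_mult_l)



definition S6 :: "('b::finite \<times> 'b \<Rightarrow> 'k::field) \<Rightarrow> ('b \<times> 'b \<Rightarrow> 'k) \<Rightarrow> ('b \<times> 'b \<Rightarrow> 'k)
   \<Rightarrow> ('b \<Rightarrow> 'b \<Rightarrow> 'b \<Rightarrow> 'b \<Rightarrow> 'b \<Rightarrow> 'b \<Rightarrow> 'k) \<Rightarrow> 'k" where
  "S6 U V W F = (\<Sum>a1\<in>UNIV. \<Sum>a2\<in>UNIV. \<Sum>b1\<in>UNIV. \<Sum>b2\<in>UNIV. \<Sum>c1\<in>UNIV. \<Sum>c2\<in>UNIV.
      U (a1,a2) * V (b1,b2) * W (c1,c2) * F a1 b1 c1 a2 b2 c2)"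

lemma S6_add1: "S6 (\<lambda>p. U p + U' p) V W F = S6 U V W F + S6 U' V W F"
  unfolding S6_def by (simp add: distrib_right sum.distrib)
lemma S6_add2: "S6 U (\<lambda>p. V p + V' p) W F = S6 U V W F + S6 U V' W F"
  unfolding S6_def by (simp add: distrib_right distrib_left sum.distrib)
lemma S6_add3: "S6 U V (\<lambda>p. W p + W' p) F = S6 U V W F + S6 U V W' F"
  unfolding S6_def by (simp add: distrib_right distrib_left sum.distrib)
lemma S6_sc1: "S6 (\<lambda>p. c * U p) V W F = c * S6 U V W F"
  unfolding S6_def by (simp add: sum_distrib_left ac_simps)
lemma S6_sc2: "S6 U (\<lambda>p. c * V p) W F = c * S6 U V W F"
  unfolding S6_def by (simp add: sum_distrib_left ac_simps)
lemma S6_sc3: "S6 U V (\<lambda>p. c * W p) F = c * S6 U V W F"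
  unfolding S6_def by (simp add: sum_distrib_left ac_simps)
lemma S6_zero1: "S6 (\<lambda>p. 0) V W F = 0" unfolding S6_def by simp
lemma S6_zero2: "S6 U (\<lambda>p. 0) W F = 0" unfolding S6_def by simp
lemma S6_zero3: "S6 U V (\<lambda>p. 0) F = 0" unfolding S6_def by simp

lemma S6_sum1: "finite A \<Longrightarrow> S6 (\<lambda>p. \<Sum>a\<in>A. f a p) V W F = (\<Sum>a\<in>A. S6 (f a) V W F)"
  by (induction A rule: finite_induct) (simp_all add: S6_zero1 S6_add1)
lemma S6_sum2: "finite A \<Longrightarrow> S6 U (\<lambda>p. \<Sum>a\<in>A. f a p) W F = (\<Sum>a\<in>A. S6 U (f a) W F)"
  by (induction A rule: finite_induct) (simp_all add: S6_zero2 S6_add2)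
lemma S6_sum3: "finite A \<Longrightarrow> S6 U V (\<lambda>p. \<Sum>a\<in>A. f a p) F = (\<Sum>a\<in>A. S6 U V (f a) F)"
  by (induction A rule: finite_induct) (simp_all add: S6_zero3 S6_add3)

lemma comul_bvec: "comul co (bvec a) (j,k) = co a j k"
  unfolding comul_def by (simp add: bvec_mult_l)

lemma comul_expand: "comul co u = (\<lambda>p. \<Sum>a\<in>UNIV. u a * comul co (bvec a) p)"
  by (rule ext, clarsimp simp: comul_bvec, simp add: comul_def)

lemma S6_comul: "S6 (comul co u) (comul co v) (comul co w) F =
   (\<Sum>a\<in>UNIV. \<Sum>b\<in>UNIV. \<Sum>c\<in>UNIV. u a * v b * w c * sw3 co a b c F)"
proof -
  have e: "S6 (comul co (bvec a)) (comul co (bvec b)) (comul co (bvec c)) F = sw3 co a b c F" for a b c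
    unfolding S6_def sw3_def by (simp add: comul_bvec)
  show ?thesis
    apply (subst comul_expand[of co u], subst comul_expand[of co v], subst comul_expand[of co w])
    apply (simp add: S6_sum1 S6_sum2 S6_sum3 S6_sc1 S6_sc2 S6_sc3 e sum_distrib_left ac_simps)
    done
qed

lemma S6_tens: "S6 (tens p1 q1) (tens p2 q2) (tens p3 q3) (\<lambda>a1 b1 c1 a2 b2 c2. G a1 b1 c1 * H a2 b2 c2)
  = (\<Sum>a1\<in>UNIV. \<Sum>b1\<in>UNIV. \<Sum>c1\<in>UNIV. p1 a1 * p2 b1 * p3 c1 * G a1 b1 c1) *
    (\<Sum>a2\<in>UNIV. \<Sum>b2\<in>UNIV. \<Sum>c2\<in>UNIV. q1 a2 * q2 b2 * q3 c2 * H a2 b2 c2)"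
proof -
  have "S6 (tens p1 q1) (tens p2 q2) (tens p3 q3) (\<lambda>a1 b1 c1 a2 b2 c2. G a1 b1 c1 * H a2 b2 c2)
     = (\<Sum>a1\<in>UNIV. \<Sum>a2\<in>UNIV. \<Sum>b1\<in>UNIV. \<Sum>b2\<in>UNIV. \<Sum>c1\<in>UNIV. \<Sum>c2\<in>UNIV.
        (p1 a1 * p2 b1 * p3 c1 * G a1 b1 c1) * (q1 a2 * q2 b2 * q3 c2 * H a2 b2 c2))"
    unfolding S6_def tens_def by (simp add: ac_simps)
  also have "\<dots> = (\<Sum>a1\<in>UNIV. \<Sum>b1\<in>UNIV. \<Sum>a2\<in>UNIV. \<Sum>b2\<in>UNIV. \<Sum>c1\<in>UNIV. \<Sum>c2\<in>UNIV.
        (p1 a1 * p2 b1 * p3 c1 * G a1 b1 c1) * (q1 a2 * q2 b2 * q3 c2 * H a2 b2 c2))"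
    by (rule sum.cong[OF refl], rule sum.swap)
  also have "\<dots> = (\<Sum>a1\<in>UNIV. \<Sum>b1\<in>UNIV. \<Sum>a2\<in>UNIV. \<Sum>c1\<in>UNIV. \<Sum>b2\<in>UNIV. \<Sum>c2\<in>UNIV.
        (p1 a1 * p2 b1 * p3 c1 * G a1 b1 c1) * (q1 a2 * q2 b2 * q3 c2 * H a2 b2 c2))"
    by (rule sum.cong[OF refl], rule sum.cong[OF refl], rule sum.cong[OF refl], rule sum.swap)
  also have "\<dots> = (\<Sum>a1\<in>UNIV. \<Sum>b1\<in>UNIV. \<Sum>c1\<in>UNIV. \<Sum>a2\<in>UNIV. \<Sum>b2\<in>UNIV. \<Sum>c2\<in>UNIV.
        (p1 a1 * p2 b1 * p3 c1 * G a1 b1 c1) * (q1 a2 * q2 b2 * q3 c2 * H a2 b2 c2))"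
    by (rule sum.cong[OF refl], rule sum.cong[OF refl], rule sum.swap)
  also have "\<dots> = (\<Sum>a1\<in>UNIV. \<Sum>b1\<in>UNIV. \<Sum>c1\<in>UNIV. p1 a1 * p2 b1 * p3 c1 * G a1 b1 c1) *
    (\<Sum>a2\<in>UNIV. \<Sum>b2\<in>UNIV. \<Sum>c2\<in>UNIV. q1 a2 * q2 b2 * q3 c2 * H a2 b2 c2)"
    by (simp only: sum_distrib_right, simp only: sum_distrib_left)
  finally show ?thesis .
qed



lemma mulv_add_r: "mulv mu u (\<lambda>k. f k + g k) t = mulv mu u f t + mulv mu u g t"
  unfolding mulv_def by (simp add: algebra_simps sum.distrib)
lemma mulv_add_l: "mulv mu (\<lambda>k. f k + g k) v t = mulv mu f v t + mulv mu g v t"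
  unfolding mulv_def by (simp add: algebra_simps sum.distrib)
lemma mulv_sc_r: "mulv mu u (\<lambda>k. c * f k) t = c * mulv mu u f t"
  unfolding mulv_def by (simp add: sum_distrib_left ac_simps)
lemma mulv_sc_l: "mulv mu (\<lambda>k. c * f k) v t = c * mulv mu f v t"
  unfolding mulv_def by (simp add: sum_distrib_left ac_simps)
lemma mulv_sum_r: "finite A \<Longrightarrow> mulv mu u (\<lambda>k. \<Sum>b\<in>A. f b k) t = (\<Sum>b\<in>A. mulv mu u (f b) t)"
  by (induction A rule: finite_induct) (simp_all add: mulv_add_r, simp add: mulv_def)
lemma mulv_sum_l: "finite A \<Longrightarrow> mulv mu (\<lambda>k. \<Sum>b\<in>A. f b k) v t = (\<Sum>b\<in>A. mulv mu (f b) v t)"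
  by (induction A rule: finite_induct) (simp_all add: mulv_add_l, simp add: mulv_def)

lemma mulv_fun_right: "mulv mu u v = (\<lambda>t. \<Sum>b\<in>UNIV. v b * mulv mu u (bvec b) t)"
  using mulv_lin_right by blast
lemma mulv_fun_left: "mulv mu u v = (\<lambda>t. \<Sum>a\<in>UNIV. u a * mulv mu (bvec a) v t)"
  using mulv_lin_left by blast

lemma mulv3L: "mulv mu p1 (mulv mu p2 p3) t =
   (\<Sum>a1\<in>UNIV. \<Sum>b1\<in>UNIV. \<Sum>c1\<in>UNIV. p1 a1 * p2 b1 * p3 c1 * mulv mu (bvec a1) (mulv mu (bvec b1) (bvec c1)) t)"
proof -
  have i: "mulv mu p2 p3 = (\<lambda>k. \<Sum>b1\<in>UNIV. \<Sum>c1\<in>UNIV. p2 b1 * p3 c1 * mulv mu (bvec b1) (bvec c1) k)"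
    apply (rule ext)
    apply (subst mulv_lin_left)
    apply (subst mulv_lin_right)
    apply (simp add: sum_distrib_left ac_simps)
    done
  show ?thesis
    apply (subst mulv_lin_left)
    apply (subst i)
    apply (simp add: mulv_sum_r mulv_sc_r sum_distrib_left ac_simps)
    done
qed

lemma mulv3R: "mulv mu (mulv mu p1 p2) p3 t =
   (\<Sum>a1\<in>UNIV. \<Sum>b1\<in>UNIV. \<Sum>c1\<in>UNIV. p1 a1 * p2 b1 * p3 c1 * mulv mu (mulv mu (bvec a1) (bvec b1)) (bvec c1) t)"
proof -
  have i: "mulv mu p1 p2 = (\<lambda>k. \<Sum>b1\<in>UNIV. \<Sum>c1\<in>UNIV. p1 b1 * p2 c1 * mulv mu (bvec b1) (bvec c1) k)"
    apply (rule ext)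
    apply (subst mulv_lin_left)
    apply (subst mulv_lin_right)
    apply (simp add: sum_distrib_left ac_simps)
    done
  have "mulv mu (mulv mu p1 p2) p3 t = (\<Sum>c1\<in>UNIV. p3 c1 * mulv mu (mulv mu p1 p2) (bvec c1) t)"
    by (rule mulv_lin_right)
  also have "\<dots> = (\<Sum>c1\<in>UNIV. \<Sum>a1\<in>UNIV. \<Sum>b1\<in>UNIV. p1 a1 * p2 b1 * p3 c1 * mulv mu (mulv mu (bvec a1) (bvec b1)) (bvec c1) t)"
    apply (subst i)
    apply (simp add: mulv_sum_l mulv_sc_l sum_distrib_left ac_simps)
    done
  also have "\<dots> = (\<Sum>a1\<in>UNIV. \<Sum>c1\<in>UNIV. \<Sum>b1\<in>UNIV. p1 a1 * p2 b1 * p3 c1 * mulv mu (mulv mu (bvec a1) (bvec b1)) (bvec c1) t)"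
    by (rule sum.swap)
  also have "\<dots> = (\<Sum>a1\<in>UNIV. \<Sum>b1\<in>UNIV. \<Sum>c1\<in>UNIV. p1 a1 * p2 b1 * p3 c1 * mulv mu (mulv mu (bvec a1) (bvec b1)) (bvec c1) t)"
    by (rule sum.cong[OF refl], rule sum.swap)
  finally show ?thesis .
qed

definition FL where "FL mu phi t = (\<lambda>a1 b1 c1 a2 b2 c2. mulv mu (bvec a1) (mulv mu (bvec b1) (bvec c1)) t * phi a2 b2 c2)"
definition FR where "FR mu phi t = (\<lambda>a1 b1 c1 a2 b2 c2. phi a1 b1 c1 * mulv mu (mulv mu (bvec a2) (bvec b2)) (bvec c2) t)"

lemma S6_FL: "S6 (tens p1 q1) (tens p2 q2) (tens p3 q3) (FL mu phi t) = mulv mu p1 (mulv mu p2 p3) t * trif phi q1 q2 q3"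
  unfolding FL_def S6_tens mulv3L[of mu p1 p2 p3 t] trif_def by (rule refl)

lemma S6_FR: "S6 (tens p1 q1) (tens p2 q2) (tens p3 q3) (FR mu phi t) = trif phi p1 p2 p3 * mulv mu (mulv mu q1 q2) q3 t"
  unfolding FR_def S6_tens mulv3R[of mu q1 q2 q3 t] trif_def by (rule refl)

lemma QA_vec:
  assumes "majid_algebra mu one co eps phi s alpha beta"
  shows "S6 (comul co u) (comul co v) (comul co w) (FL mu phi t) = S6 (comul co u) (comul co v) (comul co w) (FR mu phi t)"
proof -
  have "\<forall>a b c t. sw3 co a b c (FL mu phi t) = sw3 co a b c (FR mu phi t)"
    using assms unfolding majid_algebra_def FL_def FR_def by (elim conjE) assumption
  then show ?thesis unfolding S6_comul by simp
qed



definition P2 :: "('b::finite \<Rightarrow> 'b \<Rightarrow> 'b \<Rightarrow> 'k::field) \<Rightarrow> ('b \<times> 'b \<Rightarrow> 'k) \<Rightarrow> ('b \<times> 'b \<Rightarrow> 'k) \<Rightarrow> ('b \<times> 'b \<Rightarrow> 'k)" where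
  "P2 mu U V = (\<lambda>(j,k). \<Sum>a1\<in>UNIV. \<Sum>a2\<in>UNIV. \<Sum>b1\<in>UNIV. \<Sum>b2\<in>UNIV.
      U (a1,a2) * V (b1,b2) * mu a1 b1 j * mu a2 b2 k)"

lemma P2_add1: "P2 mu (\<lambda>p. U p + U' p) V p = P2 mu U V p + P2 mu U' V p"
  unfolding P2_def by (cases p) (simp add: distrib_right sum.distrib)
lemma P2_add2: "P2 mu U (\<lambda>p. V p + V' p) p = P2 mu U V p + P2 mu U V' p"
  unfolding P2_def by (cases p) (simp add: distrib_right distrib_left sum.distrib)
lemma P2_sc1: "P2 mu (\<lambda>p. c * U p) V p = c * P2 mu U V p"
  unfolding P2_def by (cases p) (simp add: sum_distrib_left ac_simps)
lemma P2_sc2: "P2 mu U (\<lambda>p. c * V p) p = c * P2 mu U V p"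
  unfolding P2_def by (cases p) (simp add: sum_distrib_left ac_simps)
lemma P2_sum1: "finite A \<Longrightarrow> P2 mu (\<lambda>p. \<Sum>a\<in>A. f a p) V p = (\<Sum>a\<in>A. P2 mu (f a) V p)"
  by (induction A rule: finite_induct) (simp_all add: P2_add1, simp add: P2_def split: prod.split)
lemma P2_sum2: "finite A \<Longrightarrow> P2 mu U (\<lambda>p. \<Sum>a\<in>A. f a p) p = (\<Sum>a\<in>A. P2 mu U (f a) p)"
  by (induction A rule: finite_induct) (simp_all add: P2_add2, simp add: P2_def split: prod.split)

lemma P2_tens: "P2 mu (tens p q) (tens r s) = tens (mulv mu p r) (mulv mu q s)"
proof (rule ext, clarify)
  fix j k
  have "P2 mu (tens p q) (tens r s) (j,k) = (\<Sum>a1\<in>UNIV. \<Sum>a2\<in>UNIV. \<Sum>b1\<in>UNIV. \<Sum>b2\<in>UNIV.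
      (p a1 * r b1 * mu a1 b1 j) * (q a2 * s b2 * mu a2 b2 k))"
    unfolding P2_def tens_def by (simp add: ac_simps)
  also have "\<dots> = (\<Sum>a1\<in>UNIV. \<Sum>b1\<in>UNIV. \<Sum>a2\<in>UNIV. \<Sum>b2\<in>UNIV.
      (p a1 * r b1 * mu a1 b1 j) * (q a2 * s b2 * mu a2 b2 k))"
    by (rule sum.cong[OF refl], rule sum.swap)
  also have "\<dots> = tens (mulv mu p r) (mulv mu q s) (j,k)"
    unfolding tens_def mulv_def by (simp only: prod.case sum_distrib_right, simp only: sum_distrib_left)
  finally show "P2 mu (tens p q) (tens r s) (j,k) = tens (mulv mu p r) (mulv mu q s) (j,k)" .
qed

lemma comul_mulv:
  assumes "majid_algebra mu one co eps phi s alpha beta"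
  shows "comul co (mulv mu u v) = P2 mu (comul co u) (comul co v)"
proof (rule ext, clarify)
  fix j k
  have ax: "(\<Sum>l\<in>UNIV. mu a b l * co l j k) = P2 mu (comul co (bvec a)) (comul co (bvec b)) (j,k)" for a b
    using assms unfolding majid_algebra_def P2_def by (simp add: comul_bvec)
  have "comul co (mulv mu u v) (j,k) = (\<Sum>l\<in>UNIV. \<Sum>a\<in>UNIV. \<Sum>b\<in>UNIV. u a * v b * (mu a b l * co l j k))"
    unfolding comul_def mulv_def by (simp add: sum_distrib_right sum_distrib_left ac_simps)
  also have "\<dots> = (\<Sum>a\<in>UNIV. \<Sum>l\<in>UNIV. \<Sum>b\<in>UNIV. u a * v b * (mu a b l * co l j k))"
    by (rule sum.swap)
  also have "\<dots> = (\<Sum>a\<in>UNIV. \<Sum>b\<in>UNIV. \<Sum>l\<in>UNIV. u a * v b * (mu a b l * co l j k))"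
    by (rule sum.cong[OF refl], rule sum.swap)
  also have "\<dots> = (\<Sum>a\<in>UNIV. \<Sum>b\<in>UNIV. u a * v b * P2 mu (comul co (bvec a)) (comul co (bvec b)) (j,k))"
    by (simp add: ax[symmetric] sum_distrib_left)
  also have "\<dots> = P2 mu (comul co u) (comul co v) (j,k)"
    apply (subst comul_expand[of co u], subst comul_expand[of co v])
    apply (simp add: P2_sum1 P2_sum2 P2_sc1 P2_sc2 sum_distrib_left ac_simps)
    done
  finally show "comul co (mulv mu u v) (j,k) = P2 mu (comul co u) (comul co v) (j,k)" .
qed



lemma sum_bvec_r2[simp]: "(\<Sum>i\<in>(UNIV::'b::finite set). f i * bvec i j) = (f j :: 'k::field)"
proof -
  have "\<And>i. f i * bvec i j = (if i = j then f j else 0)" by (auto simp: bvec_def)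
  then show ?thesis by simp
qed

lemma unit_ax: assumes "majid_algebra mu one co eps phi s alpha beta"
  shows "\<forall>a. mulv mu one (bvec a) = bvec a \<and> mulv mu (bvec a) one = bvec a"
  using assms unfolding majid_algebra_def by (elim conjE) assumption

lemma unit_l: assumes "majid_algebra mu one co eps phi s alpha beta" shows "mulv mu one v = v"
proof (rule ext)
  fix t
  have "\<And>b. mulv mu one (bvec b) = bvec b" using unit_ax[OF assms] by blast
  then show "mulv mu one v t = v t" by (subst mulv_lin_right) simp
qed
lemma unit_r: assumes "majid_algebra mu one co eps phi s alpha beta" shows "mulv mu v one = v"
proof (rule ext)
  fix t
  have "\<And>b. mulv mu (bvec b) one = bvec b" using unit_ax[OF assms] by blast
  then show "mulv mu v one t = v t" by (subst mulv_lin_left) simp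
qed
lemma comul_one: assumes "majid_algebra mu one co eps phi s alpha beta" shows "comul co one = tens one one"
  using assms unfolding majid_algebra_def by (elim conjE) assumption

lemma homog_supp: assumes "X \<in> homog deg n" "X p \<noteq> 0" shows "deg p = n"
proof (rule ccontr)
  assume d: "deg p \<noteq> n"
  from assms(1) obtain F c where F: "finite F" "F \<subseteq> {bvec b | b. deg b = n}" "X = (\<lambda>x. \<Sum>u\<in>F. c u * u x)"
    unfolding homog_def lspan_def by blast
  have "\<forall>u\<in>F. u p = 0"
  proof
    fix u assume "u \<in> F"
    then obtain b where "u = bvec b" "deg b = n" using F(2) by blast
    then show "u p = 0" using d by (auto simp: bvec_def)
  qed
  then have "X p = 0" using F(3) by (auto intro!: sum.neutral)
  then show False using assms(2) by simp
qed

lemma trif_z1: assumes "\<forall>p q r. phi p q r \<noteq> 0 \<longrightarrow> deg p = 0 \<and> deg q = 0 \<and> deg r = 0"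
  "\<forall>p. X p \<noteq> 0 \<longrightarrow> deg p = (1::nat)" shows "trif phi X v w = 0"
  unfolding trif_def by (rule sum.neutral, intro ballI sum.neutral, use assms in force)
lemma trif_z2: assumes "\<forall>p q r. phi p q r \<noteq> 0 \<longrightarrow> deg p = 0 \<and> deg q = 0 \<and> deg r = 0"
  "\<forall>p. X p \<noteq> 0 \<longrightarrow> deg p = (1::nat)" shows "trif phi u X w = 0"
  unfolding trif_def by (rule sum.neutral, intro ballI sum.neutral, use assms in force)
lemma trif_z3: assumes "\<forall>p q r. phi p q r \<noteq> 0 \<longrightarrow> deg p = 0 \<and> deg q = 0 \<and> deg r = 0"
  "\<forall>p. X p \<noteq> 0 \<longrightarrow> deg p = (1::nat)" shows "trif phi u v X = 0"
  unfolding trif_def by (rule sum.neutral, intro ballI sum.neutral, use assms in force)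

lemma T1:
  assumes maj: "majid_algebra mu one co eps phi s alpha beta"
    and hX: "comul co X = (\<lambda>p. tens X one p + tens g X p)"
    and hk: "comul co k = tens k k" and hl: "comul co l = tens l l"
    and z: "trif phi X k l = 0"
  shows "mulv mu X (mulv mu k l) t * trif phi one k l = trif phi g k l * mulv mu (mulv mu X k) l t"
  using QA_vec[OF maj, of X k l t] unfolding hX hk hl S6_add1 S6_FL S6_FR z by simp

lemma T2:
  assumes maj: "majid_algebra mu one co eps phi s alpha beta"
    and hX: "comul co X = (\<lambda>p. tens X one p + tens g X p)"
    and hk: "comul co k = tens k k" and hl: "comul co l = tens l l"
    and z: "trif phi k X l = 0"
  shows "mulv mu k (mulv mu X l) t * trif phi k one l = trif phi k g l * mulv mu (mulv mu k X) l t"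
  using QA_vec[OF maj, of k X l t] unfolding hX hk hl S6_add2 S6_FL S6_FR z by simp

lemma T3:
  assumes maj: "majid_algebra mu one co eps phi s alpha beta"
    and hX: "comul co X = (\<lambda>p. tens X one p + tens g X p)"
    and hk: "comul co k = tens k k" and hl: "comul co l = tens l l"
    and z: "trif phi k l X = 0"
  shows "mulv mu k (mulv mu l X) t * trif phi k l one = trif phi k l g * mulv mu (mulv mu k l) X t"
  using QA_vec[OF maj, of k l X t] unfolding hX hk hl S6_add3 S6_FL S6_FR z by simp



lemma comul_sc: "comul co (\<lambda>t. q * f t) = (\<lambda>p. q * comul co f p)"
  by (rule ext, clarsimp simp: comul_def sum_distrib_left ac_simps)

lemma indep:
  fixes X Y :: "'b::finite \<Rightarrow> 'k::field"
  assumes "\<forall>p1 p2. A p1 * Y p2 + B p1 * X p2 = 0" "\<forall>c. Y \<noteq> (\<lambda>t. c * X t)" "X \<noteq> (\<lambda>_. 0)"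
  shows "A = (\<lambda>_. 0) \<and> B = (\<lambda>_. 0)"
proof -
  have A0: "A = (\<lambda>_. 0)"
  proof (rule ccontr)
    assume "A \<noteq> (\<lambda>_. 0)"
    then obtain p0 where p0: "A p0 \<noteq> 0" by auto
    have "Y = (\<lambda>t. (- B p0 / A p0) * X t)"
    proof
      fix t
      have "A p0 * Y t + B p0 * X t = 0" using assms(1) by blast
      then have "A p0 * Y t = - (B p0 * X t)" by (simp add: eq_neg_iff_add_eq_0)
      then have "Y t = - (B p0 * X t) / A p0" using p0 by (metis nonzero_mult_div_cancel_left)
      then show "Y t = (- B p0 / A p0) * X t" by simp
    qed
    then show False using assms(2) by blast
  qed
  moreover have "B = (\<lambda>_. 0)"
  proof
    fix p
    obtain t where "X t \<noteq> 0" using assms(3) by auto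
    moreover have "A p * Y t + B p * X t = 0" using assms(1) by blast
    ultimately show "B p = 0" using A0 by simp
  qed
  ultimately show ?thesis by simp
qed



lemma not_mult:
  assumes hX: "comul co X = (\<lambda>p. tens X one p + tens g X p)"
    and hY: "comul co Y = (\<lambda>p. tens Y one p + tens h Y p)"
    and X0: "X \<noteq> (\<lambda>_. 0)" and Y0: "Y \<noteq> (\<lambda>_. 0)" and gh: "g \<noteq> h"
  shows "\<forall>c. Y \<noteq> (\<lambda>t. c * X t)"
proof (rule allI, rule notI)
  fix c assume Yc: "Y = (\<lambda>t. c * X t)"
  have c0: "c \<noteq> 0" using Y0 Yc by auto
  obtain t where t: "X t \<noteq> 0" using X0 by auto
  have "comul co Y = (\<lambda>p. c * comul co X p)" using Yc comul_sc by blast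
  then have "\<And>p1 p2. tens Y one (p1,p2) + tens h Y (p1,p2) = c * (tens X one (p1,p2) + tens g X (p1,p2))"
    using hX hY by metis
  then have "\<And>p1. c * X t * h p1 = c * X t * g p1"
    unfolding tens_def using Yc by (simp add: algebra_simps)
  then have "\<And>p1. h p1 = g p1" using c0 t by simp
  then show False using gh by auto
qed

lemma R12:
  assumes maj: "majid_algebra mu one co eps phi s alpha beta"
    and hX: "comul co X = (\<lambda>p. tens X one p + tens g X p)"
    and hY: "comul co Y = (\<lambda>p. tens Y one p + tens h Y p)"
    and X0: "X \<noteq> (\<lambda>_. 0)" and Y0: "Y \<noteq> (\<lambda>_. 0)" and gh: "g \<noteq> h"
    and XY: "mulv mu X Y = (\<lambda>t. q * mulv mu Y X t)"
    and com: "mulv mu g h = mulv mu h g"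
  shows "mulv mu X h = (\<lambda>t. q * mulv mu h X t) \<and> mulv mu g Y = (\<lambda>t. q * mulv mu Y g t)"
proof -
  have e: "comul co (mulv mu X Y) = (\<lambda>p. q * comul co (mulv mu Y X) p)"
    using XY comul_sc by metis
  have u1: "mulv mu one one = one" "mulv mu one Y = Y" "mulv mu X one = X" "mulv mu one X = X" "mulv mu Y one = Y"
    using unit_l[OF maj] unit_r[OF maj] by auto
  have "\<forall>p1 p2. (\<lambda>t. mulv mu X h t - q * mulv mu h X t) p1 * Y p2 + (\<lambda>t. mulv mu g Y t - q * mulv mu Y g t) p1 * X p2 = 0"
  proof (intro allI)
    fix p1 p2
    have "comul co (mulv mu X Y) (p1,p2) = q * comul co (mulv mu Y X) (p1,p2)" using e by metis
    then have "P2 mu (\<lambda>p. tens X one p + tens g X p) (\<lambda>p. tens Y one p + tens h Y p) (p1,p2)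
       = q * P2 mu (\<lambda>p. tens Y one p + tens h Y p) (\<lambda>p. tens X one p + tens g X p) (p1,p2)"
      unfolding comul_mulv[OF maj] hX hY .
    then have "tens (mulv mu X Y) (mulv mu one one) (p1,p2) + tens (mulv mu X h) (mulv mu one Y) (p1,p2)
      + (tens (mulv mu g Y) (mulv mu X one) (p1,p2) + tens (mulv mu g h) (mulv mu X Y) (p1,p2))
      = q * (tens (mulv mu Y X) (mulv mu one one) (p1,p2) + tens (mulv mu Y g) (mulv mu one X) (p1,p2)
      + (tens (mulv mu h X) (mulv mu Y one) (p1,p2) + tens (mulv mu h g) (mulv mu Y X) (p1,p2)))"
      unfolding P2_add1 P2_add2 P2_tens .
    then show "(\<lambda>t. mulv mu X h t - q * mulv mu h X t) p1 * Y p2 + (\<lambda>t. mulv mu g Y t - q * mulv mu Y g t) p1 * X p2 = 0"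
      unfolding u1 tens_def XY com by (simp add: algebra_simps)
  qed
  from indep[OF this not_mult[OF hX hY X0 Y0 gh] X0]
  show ?thesis by (auto simp: fun_eq_iff)
qed



lemma pair:
  assumes maj: "majid_algebra mu one co eps phi s alpha beta"
    and hX: "comul co X = (\<lambda>p. tens X one p + tens g X p)"
    and hY: "comul co Y = (\<lambda>p. tens Y one p + tens h Y p)"
    and hg: "comul co g = tens g g" and hh: "comul co h = tens h h"
    and X0: "X \<noteq> (\<lambda>_. 0)" and Y0: "Y \<noteq> (\<lambda>_. 0)" and gh: "g \<noteq> h"
    and XY: "mulv mu X Y = (\<lambda>t. q * mulv mu Y X t)"
    and com: "mulv mu g h = mulv mu h g" and gg: "mulv mu g g = one" and hh1: "mulv mu h h = one"
    and zX: "\<And>v w. trif phi X v w = 0 \<and> trif phi v X w = 0 \<and> trif phi v w X = 0"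
    and zY: "\<And>v w. trif phi Y v w = 0 \<and> trif phi v Y w = 0 \<and> trif phi v w Y = 0"
    and o1: "trif phi one h h = 1" "trif phi h one h = 1" "trif phi h h one = 1"
    and o2: "trif phi one g g = 1" "trif phi g one g = 1" "trif phi g g one = 1"
  shows "q^2 * trif phi h h g * trif phi g h h = trif phi h g h \<and>
         trif phi h g g * trif phi g g h = q^2 * trif phi g h g"
proof -
  from R12[OF maj hX hY X0 Y0 gh XY com] have R1: "mulv mu X h = (\<lambda>t. q * mulv mu h X t)"
    and R2: "mulv mu g Y = (\<lambda>t. q * mulv mu Y g t)" by auto
  obtain t where t: "X t \<noteq> 0" using X0 by auto
  obtain t' where t': "Y t' \<noteq> 0" using Y0 by auto
  have a3: "mulv mu h (mulv mu h X) t = trif phi h h g * X t"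
    using T3[OF maj hX hh hh, of t] zX o1 hh1 unit_l[OF maj] by simp
  have a2: "mulv mu h (mulv mu X h) t = trif phi h g h * mulv mu (mulv mu h X) h t"
    using T2[OF maj hX hh hh, of t] zX o1 by simp
  have a1: "X t = trif phi g h h * mulv mu (mulv mu X h) h t"
    using T1[OF maj hX hh hh, of t] zX o1 hh1 unit_r[OF maj] by simp
  have b1: "mulv mu h (mulv mu X h) t = q * (trif phi h h g * X t)"
    unfolding R1 mulv_sc_r a3 ..
  have b2: "mulv mu (mulv mu X h) h t = q * mulv mu (mulv mu h X) h t"
    unfolding R1 mulv_sc_l ..
  have "(q^2 * trif phi h h g * trif phi g h h - trif phi h g h) * X t = 0"
    using a1 a2 b1 b2 by (simp add: algebra_simps power2_eq_square)
  then have c1: "q^2 * trif phi h h g * trif phi g h h = trif phi h g h" using t by simp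
  have d3: "mulv mu g (mulv mu g Y) t' = trif phi g g h * Y t'"
    using T3[OF maj hY hg hg, of t'] zY o2 gg unit_l[OF maj] by simp
  have d2: "mulv mu g (mulv mu Y g) t' = trif phi g h g * mulv mu (mulv mu g Y) g t'"
    using T2[OF maj hY hg hg, of t'] zY o2 by simp
  have d1: "Y t' = trif phi h g g * mulv mu (mulv mu Y g) g t'"
    using T1[OF maj hY hg hg, of t'] zY o2 gg unit_r[OF maj] by simp
  have e1: "mulv mu g (mulv mu g Y) t' = q * mulv mu g (mulv mu Y g) t'"
    unfolding R2 mulv_sc_r ..
  have e2: "mulv mu (mulv mu g Y) g t' = q * mulv mu (mulv mu Y g) g t'"
    unfolding R2 mulv_sc_l ..
  define N where "N = mulv mu (mulv mu Y g) g t'"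
  have f1: "trif phi g g h * Y t' = q^2 * trif phi g h g * N"
    using d2 d3 e1 e2 unfolding N_def by (simp add: power2_eq_square ac_simps)
  have "trif phi h g g * trif phi g g h * Y t' = q^2 * trif phi g h g * (trif phi h g g * N)"
    using f1 by (simp add: ac_simps)
  then have "(trif phi h g g * trif phi g g h - q^2 * trif phi g h g) * Y t' = 0"
    using d1 unfolding N_def[symmetric] by (simp add: algebra_simps)
  then have c2: "trif phi h g g * trif phi g g h = q^2 * trif phi g h g" using t' by simp
  from c1 c2 show ?thesis by simp
qed



lemma pairset: "{(s, t). 1 \<le> s \<and> s < t \<and> t \<le> (3::nat)} = {(1,2),(1,3),(2,3)}"
  by auto

lemma pf_simp: "phi_formula a aa (i1,i2,i3) (j1,j2,j3) (k1,k2,k3) =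
  ((-1) ^ (a 1 * i1 * ((j1 + k1) div 2)) * (-1) ^ (a 2 * i2 * ((j2 + k2) div 2)) * (-1) ^ (a 3 * i3 * ((j3 + k3) div 2))) *
  ((-1) ^ (aa 1 2 * i2 * ((j1 + k1) div 2)) * (-1) ^ (aa 1 3 * i3 * ((j1 + k1) div 2)) * (-1) ^ (aa 2 3 * i3 * ((j2 + k2) div 2)) :: 'k::field)"
proof -
  have s: "{1..3::nat} = {1,2,3}" by auto
  show ?thesis unfolding phi_formula_def pairset s by (simp add: comp_def)
qed

lemma pfd_simp: "phi_formula_diag a (i1,i2,i3) (j1,j2,j3) (k1,k2,k3) =
  ((-1) ^ (a 1 * i1 * ((j1 + k1) div 2)) * (-1) ^ (a 2 * i2 * ((j2 + k2) div 2)) * (-1) ^ (a 3 * i3 * ((j3 + k3) div 2)) :: 'k::field)"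
proof -
  have s: "{1..3::nat} = {1,2,3}" by auto
  show ?thesis unfolding phi_formula_diag_def s by (simp add: comp_def)
qed

lemma neg1_pow: assumes "(n::nat) \<le> 1" "(-1::'k::field_char_0) ^ n = 1" shows "n = 0"
  using assms by (cases n) auto



theorem proposition5p5:
  fixes mu co phi :: "'b::finite \<Rightarrow> 'b \<Rightarrow> 'b \<Rightarrow> 'k::field_char_0"
    and one eps alpha beta :: "'b \<Rightarrow> 'k"
    and s :: "'b \<Rightarrow> 'b \<Rightarrow> 'k"
    and deg :: "'b \<Rightarrow> nat"
    and N :: nat and x X :: "nat \<Rightarrow> 'b \<Rightarrow> 'k" and q :: "nat \<Rightarrow> nat \<Rightarrow> 'k"
    and a :: "nat \<Rightarrow> nat" and aa :: "nat \<Rightarrow> nat \<Rightarrow> nat"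
  assumes "alg_closed_field TYPE('k)"
    and "majid_algebra mu one co eps phi s alpha beta"
    and "pointed co"
    and "graded_majid deg mu one co eps phi s alpha beta"
    and "3 \<le> N"
    and "\<forall>i\<in>{1..N}. x i \<in> grouplikes co \<and> X i \<in> homog deg 1 \<and> X i \<noteq> (\<lambda>_. 0) \<and>
           comul co (X i) = (\<lambda>p. tens (X i) one p + tens (x i) (X i) p)"
    and "\<forall>i\<in>{1..N}. \<forall>j\<in>{1..N}. i \<noteq> j \<longrightarrow>
           mulv mu (X i) (X j) = (\<lambda>t. q j i * mulv mu (X j) (X i) t)"
    and "generates mu one (grouplikes co \<union> X ` {1..N})"
    and "grouplikes co = mono mu one x ` cube" and "inj_on (mono mu one x) cube"
    and "\<forall>l\<in>{1..3}. mulv mu (x l) (x l) = one"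
    and "\<forall>l\<in>{1..3}. \<forall>m\<in>{1..3}. mulv mu (x l) (x m) = mulv mu (x m) (x l)"
    and "\<forall>l\<in>{1..3}. a l \<le> 1"
    and "\<forall>s'\<in>{1..3}. \<forall>t\<in>{1..3}. s' < t \<longrightarrow> aa s' t \<le> 1"
    and "\<forall>i\<in>cube. \<forall>j\<in>cube. \<forall>k\<in>cube.
           trif phi (mono mu one x i) (mono mu one x j) (mono mu one x k) = phi_formula a aa i j k"
  shows "aa 1 2 = 0 \<and> aa 1 3 = 0 \<and> aa 2 3 = 0 \<and>
         (\<forall>i\<in>cube. \<forall>j\<in>cube. \<forall>k\<in>cube.
           trif phi (mono mu one x i) (mono mu one x j) (mono mu one x k) = phi_formula_diag a i j k)"
proof -
  note maj = assms(2)
  have gr: "\<forall>p q r. phi p q r \<noteq> 0 \<longrightarrow> deg p = 0 \<and> deg q = 0 \<and> deg r = 0"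
    using assms(4) unfolding graded_majid_def by (elim conjE) assumption
  define E :: "nat \<Rightarrow> nat \<times> nat \<times> nat" where "E l = (if l = 1 then (1,0,0) else if l = 2 then (0,1,0) else (0,0,1))" for l
  have Ec: "E l \<in> cube" for l unfolding E_def cube_def by auto
  have zc: "(0,0,0) \<in> cube" unfolding cube_def by auto
  have mE: "mono mu one x (E l) = x l" if "l \<in> {1,2,3}" for l
    using that unfolding E_def mono_def pw_def by (auto simp: unit_l[OF maj] unit_r[OF maj])
  have m0: "mono mu one x (0,0,0) = one"
    unfolding mono_def pw_def by (simp add: unit_l[OF maj] unit_r[OF maj])
  have Phi: "trif phi (mono mu one x i) (mono mu one x j) (mono mu one x k) = phi_formula a aa i j k"
    if "i \<in> cube" "j \<in> cube" "k \<in> cube" for i j k using assms(15) that by blast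
  have key: "q j i ^ 2 * phi_formula a aa (E j) (E j) (E i) * phi_formula a aa (E i) (E j) (E j) = phi_formula a aa (E j) (E i) (E j) \<and>
         phi_formula a aa (E j) (E i) (E i) * phi_formula a aa (E i) (E i) (E j) = q j i ^ 2 * phi_formula a aa (E i) (E j) (E i)"
    if ij: "i \<in> {1,2,3}" "j \<in> {1,2,3}" "i \<noteq> j" for i j
  proof -
    have iN: "i \<in> {1..N}" "j \<in> {1..N}" using ij assms(5) by auto
    have hX: "comul co (X i) = (\<lambda>p. tens (X i) one p + tens (x i) (X i) p)"
      and hY: "comul co (X j) = (\<lambda>p. tens (X j) one p + tens (x j) (X j) p)"
      and X0: "X i \<noteq> (\<lambda>_. 0)" and Y0: "X j \<noteq> (\<lambda>_. 0)"
      and Xh: "X i \<in> homog deg 1" and Yh: "X j \<in> homog deg 1"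
      and gG: "x i \<in> grouplikes co" and hG: "x j \<in> grouplikes co"
      using assms(6) iN by auto
    have hg: "comul co (x i) = tens (x i) (x i)" using gG unfolding grouplikes_def by auto
    have hh: "comul co (x j) = tens (x j) (x j)" using hG unfolding grouplikes_def by auto
    have gh: "x i \<noteq> x j"
    proof
      assume "x i = x j"
      then have "mono mu one x (E i) = mono mu one x (E j)" using mE ij by simp
      then have "E i = E j" using assms(10) Ec unfolding inj_on_def by blast
      then show False using ij unfolding E_def by (auto split: if_splits)
    qed
    have XY: "mulv mu (X i) (X j) = (\<lambda>t. q j i * mulv mu (X j) (X i) t)" using assms(7) iN ij by blast
    have com: "mulv mu (x i) (x j) = mulv mu (x j) (x i)" using assms(12) ij by auto
    have gg: "mulv mu (x i) (x i) = one" and hh1: "mulv mu (x j) (x j) = one" using assms(11) ij by auto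
    have sX: "\<forall>p. X i p \<noteq> 0 \<longrightarrow> deg p = 1" using homog_supp[OF Xh] by blast
    have sY: "\<forall>p. X j p \<noteq> 0 \<longrightarrow> deg p = 1" using homog_supp[OF Yh] by blast
    have zX: "\<And>v w. trif phi (X i) v w = 0 \<and> trif phi v (X i) w = 0 \<and> trif phi v w (X i) = 0"
      using trif_z1[OF gr sX] trif_z2[OF gr sX] trif_z3[OF gr sX] by blast
    have zY: "\<And>v w. trif phi (X j) v w = 0 \<and> trif phi v (X j) w = 0 \<and> trif phi v w (X j) = 0"
      using trif_z1[OF gr sY] trif_z2[OF gr sY] trif_z3[OF gr sY] by blast
    have P: "trif phi (x l1) (x l2) (x l3) = phi_formula a aa (E l1) (E l2) (E l3)"
      if "l1 \<in> {i,j}" "l2 \<in> {i,j}" "l3 \<in> {i,j}" for l1 l2 l3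
    proof -
      have m: "l1 \<in> {1,2,3}" "l2 \<in> {1,2,3}" "l3 \<in> {1,2,3}" using that ij by auto
      have "x l1 = mono mu one x (E l1)" "x l2 = mono mu one x (E l2)" "x l3 = mono mu one x (E l3)"
        using mE[OF m(1)] mE[OF m(2)] mE[OF m(3)] by simp_all
      then show ?thesis using Phi[OF Ec Ec Ec, of l1 l2 l3] by simp
    qed
    have E3: "E l = (1,0,0) \<or> E l = (0,1,0) \<or> E l = (0,0,1)" for l unfolding E_def by auto
    have P0: "trif phi one (x l) (x l) = 1 \<and> trif phi (x l) one (x l) = 1 \<and> trif phi (x l) (x l) one = 1"
      if "l \<in> {i,j}" for l
    proof -
      have ml: "l \<in> {1,2,3}" using that ij by auto
      have xl: "x l = mono mu one x (E l)" using mE[OF ml] by simp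
      have q1: "trif phi one (x l) (x l) = phi_formula a aa (0,0,0) (E l) (E l)"
        using Phi[OF zc Ec Ec, of l l] unfolding m0 xl[symmetric] .
      have q2: "trif phi (x l) one (x l) = phi_formula a aa (E l) (0,0,0) (E l)"
        using Phi[OF Ec zc Ec, of l l] unfolding m0 xl[symmetric] .
      have q3: "trif phi (x l) (x l) one = phi_formula a aa (E l) (E l) (0,0,0)"
        using Phi[OF Ec Ec zc, of l l] unfolding m0 xl[symmetric] .
      show ?thesis unfolding q1 q2 q3
        using E3[of l] by (elim disjE) (simp_all add: pf_simp)
    qed
    have r: "q j i ^ 2 * trif phi (x j) (x j) (x i) * trif phi (x i) (x j) (x j) = trif phi (x j) (x i) (x j) \<and>
         trif phi (x j) (x i) (x i) * trif phi (x i) (x i) (x j) = q j i ^ 2 * trif phi (x i) (x j) (x i)"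
      using pair[OF maj hX hY hg hh X0 Y0 gh XY com gg hh1 zX zY] P0[of i] P0[of j] by auto
    then show ?thesis using P by auto
  qed
  have E1: "E 1 = (1,0,0)" "E 2 = (0,1,0)" "E 3 = (0,0,1)" unfolding E_def by auto
  have "(-1::'k) ^ aa 1 2 = 1" using key[of 1 2] unfolding E1 pf_simp by simp
  moreover have "aa 1 2 \<le> 1" using assms(14) by auto
  ultimately have z12: "aa 1 2 = 0" using neg1_pow by blast
  have "(-1::'k) ^ aa 1 3 = 1" using key[of 1 3] unfolding E1 pf_simp by simp
  moreover have "aa 1 3 \<le> 1" using assms(14) by auto
  ultimately have z13: "aa 1 3 = 0" using neg1_pow by blast
  have "(-1::'k) ^ aa 2 3 = 1" using key[of 2 3] unfolding E1 pf_simp by simp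
  moreover have "aa 2 3 \<le> 1" using assms(14) by auto
  ultimately have z23: "aa 2 3 = 0" using neg1_pow by blast
  have "\<forall>i\<in>cube. \<forall>j\<in>cube. \<forall>k\<in>cube.
           trif phi (mono mu one x i) (mono mu one x j) (mono mu one x k) = phi_formula_diag a i j k"
  proof (intro ballI)
    fix i j k assume c: "i \<in> cube" "j \<in> cube" "k \<in> cube"
    obtain i1 i2 i3 j1 j2 j3 k1 k2 k3 where e: "i = (i1,i2,i3)" "j = (j1,j2,j3)" "k = (k1,k2,k3)"
      by (metis prod.exhaust)
    have "phi_formula a aa i j k = phi_formula_diag a i j k"
      unfolding e pf_simp pfd_simp z12 z13 z23 by simp
    then show "trif phi (mono mu one x i) (mono mu one x j) (mono mu one x k) = phi_formula_diag a i j k"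
      using Phi[OF c] by simp
  qed
  then show ?thesis using z12 z13 z23 by simp
qed

end
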